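(* In each iteration of Algorithm 1, $i_R=b(i^* )$; that is, for the set $S$ immediately before this iteration, none of the indices $j$ with $i^*\le j<b(i^* )$ belongs to $S$, and $b(i^* )\in S$.
   Context: Problem (P): given an integer $n\ge1$, reals $0<q_1\le\cdots\le q_n$, $z_1,\dots,z_n>0$ and $K>0$, maximize $\sum_{i=1}^n x_i$ subject to $0\le x_i\le q_i$, $0\le x_1\le\cdots\le x_n$, $\sum_{i=1}^n z_ix_i\le K$. For $1\le i<j\le n+1$ let $\mathrm{sum}(i,j)=z_i+\cdots+z_{j-1}$ and $\mathrm{avg}(i,j)=\mathrm{sum}(i,j)/(j-i)$. Algorithm 1 (run on an instance of (P)): Initialize $S=\{0,n+1\}$, $y_i=\mathrm{avg}(i,n+1)$ and $x_i=0$ for $i=1,\dots,n$, and $\hat B=K$. While $\hat B>0$ and $S\ne\{0,1,\dots,n+1\}$, perform an iteration: let $i^*$ be the index $i\in\{1,\dots,n\}\setminus S$ minimizing $y_i$, ties broken in favour of the smallest index; let $i_L=\max\{j\in S:j<i^*\}$ and $i_R=\min\{j\in S:j>i^*\}$; set $d=\min\{\hat B/((i_R-i^* )y_{i^*}),\ q_{i^*}-x_{i^*}\}$; set $\hat B\leftarrow\hat B-d(i_R-i^* )y_{i^*}$; set $x_i\leftarrow x_i+d$ for all $i^*\le i<i_R$; set $y_i\leftarrow\mathrm{avg}(i,i^* )$ for all $i_L<i<i^*$; add $i^*$ to $S$. Finally output $x_1,\dots,x_n$. Blocker: for $1\le i\le n$, $b(i)$ is the value of $i^*$ in the last iteration in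 which $y_i$ is updated (i.e. the last iteration with $i_L<i<i^*$); if $y_i$ is never updated, $b(i)=n+1$. *)

theory Defs
  imports Complex_Main
begin

record alg_state =
  SS :: "nat set"
  yy :: "nat \<Rightarrow> real"
  xx :: "nat \<Rightarrow> real"
  BB :: real

definition avg :: "(nat \<Rightarrow> real) \<Rightarrow> nat \<Rightarrow> nat \<Rightarrow> real" where
  "avg z i j = (\<Sum>k=i..<j. z k) / real (j - i)"

definition alg_init :: "nat \<Rightarrow> (nat \<Rightarrow> real) \<Rightarrow> real \<Rightarrow> alg_state" where
  "alg_init n z K = \<lparr>SS = {0, n+1}, yy = (\<lambda>i. avg z i (n+1)), xx = (\<lambda>_. 0), BB = K\<rparr>"

definition istar :: "nat \<Rightarrow> alg_state \<Rightarrow> nat" where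
  "istar n s = (LEAST i. i \<in> {1..n} - SS s \<and> (\<forall>j \<in> {1..n} - SS s. yy s i \<le> yy s j))"

definition iL :: "alg_state \<Rightarrow> nat \<Rightarrow> nat" where
  "iL s i = Max {j \<in> SS s. j < i}"

definition iR :: "alg_state \<Rightarrow> nat \<Rightarrow> nat" where
  "iR s i = Min {j \<in> SS s. i < j}"

definition alg_step :: "nat \<Rightarrow> (nat \<Rightarrow> real) \<Rightarrow> (nat \<Rightarrow> real) \<Rightarrow> alg_state \<Rightarrow> alg_state" where
  "alg_step n q z s =
     (let i = istar n s; l = iL s i; r = iR s i;
          d = min (BB s / (real (r - i) * yy s i)) (q i - xx s i)
      in \<lparr>SS = insert i (SS s),
          yy = (\<lambda>j. if l < j \<and> j < i then avg z j i else yy s j),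
          xx = (\<lambda>j. if i \<le> j \<and> j < r then xx s j + d else xx s j),
          BB = BB s - d * real (r - i) * yy s i\<rparr>)"

definition alg_running :: "nat \<Rightarrow> alg_state \<Rightarrow> bool" where
  "alg_running n s \<longleftrightarrow> BB s > 0 \<and> SS s \<noteq> {0..n+1}"

text \<open>State immediately before iteration k (iterations counted from 0).\<close>
definition alg_state_at :: "nat \<Rightarrow> (nat \<Rightarrow> real) \<Rightarrow> (nat \<Rightarrow> real) \<Rightarrow> real \<Rightarrow> nat \<Rightarrow> alg_state" where
  "alg_state_at n q z K k = (alg_step n q z ^^ k) (alg_init n z K)"

definition performed :: "nat \<Rightarrow> (nat \<Rightarrow> real) \<Rightarrow> (nat \<Rightarrow> real) \<Rightarrow> real \<Rightarrow> nat \<Rightarrow> bool" where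
  "performed n q z K k \<longleftrightarrow> (\<forall>m\<le>k. alg_running n (alg_state_at n q z K m))"

definition updates_y :: "nat \<Rightarrow> (nat \<Rightarrow> real) \<Rightarrow> (nat \<Rightarrow> real) \<Rightarrow> real \<Rightarrow> nat \<Rightarrow> nat \<Rightarrow> bool" where
  "updates_y n q z K k i \<longleftrightarrow> performed n q z K k \<and>
     (let s = alg_state_at n q z K k in iL s (istar n s) < i \<and> i < istar n s)"

definition blocker :: "nat \<Rightarrow> (nat \<Rightarrow> real) \<Rightarrow> (nat \<Rightarrow> real) \<Rightarrow> real \<Rightarrow> nat \<Rightarrow> nat" where
  "blocker n q z K i =
     (if \<exists>k. updates_y n q z K k i
      then istar n (alg_state_at n q z K (GREATEST k. updates_y n q z K k i))
      else n + 1)"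

end

theory Submission
  imports Defs
begin

lemma st_Suc: "alg_state_at n q z K (Suc k) = alg_step n q z (alg_state_at n q z K k)"
  by (simp add: alg_state_at_def)

lemma SS_Suc: "SS (alg_state_at n q z K (Suc k)) =
   insert (istar n (alg_state_at n q z K k)) (SS (alg_state_at n q z K k))"
  by (simp add: st_Suc alg_step_def Let_def)

lemma SS_mono: "k1 \<le> k2 \<Longrightarrow> SS (alg_state_at n q z K k1) \<subseteq> SS (alg_state_at n q z K k2)"
proof (induction k2 rule: dec_induct)
  case base then show ?case by simp
next
  case (step m) then show ?case using SS_Suc[of n q z K m] by blast
qed

lemma performed_le: "performed n q z K k \<Longrightarrow> k' \<le> k \<Longrightarrow> performed n q z K k'"
  by (simp add: performed_def)

lemma istar_mem:
  assumes "SS s \<subseteq> {0..n+1}" "0 \<in> SS s" "n+1 \<in> SS s" "SS s \<noteq> {0..n+1}"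
  shows "istar n s \<in> {1..n} - SS s"
proof -
  let ?A = "{1..n} - SS s"
  have ne: "?A \<noteq> {}"
  proof
    assume "?A = {}"
    have "x \<in> SS s" if "x \<in> {0..n+1}" for x
    proof (cases "x = 0 \<or> x = n+1")
      case True then show ?thesis using assms(2,3) by auto
    next
      case False
      then have "x \<in> {1..n}" using that by auto
      then show ?thesis using \<open>?A = {}\<close> by blast
    qed
    then have "{0..n+1} \<subseteq> SS s" by blast
    then show False using assms(1,4) by blast
  qed
  have fin: "finite (yy s ` ?A)" by simp
  have "Min (yy s ` ?A) \<in> yy s ` ?A" using ne fin by (intro Min_in) auto
  then obtain i0 where i0: "i0 \<in> ?A" "yy s i0 = Min (yy s ` ?A)" by auto
  have "\<forall>j\<in>?A. yy s i0 \<le> yy s j" using i0 fin by auto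
  then have "\<exists>i. i \<in> ?A \<and> (\<forall>j\<in>?A. yy s i \<le> yy s j)" using i0 by blast
  then have "istar n s \<in> ?A \<and> (\<forall>j\<in>?A. yy s (istar n s) \<le> yy s j)"
    unfolding istar_def by (rule LeastI_ex)
  then show ?thesis by blast
qed

lemma inv:
  "performed n q z K k \<Longrightarrow> finite (SS (alg_state_at n q z K k)) \<and> 0 \<in> SS (alg_state_at n q z K k)
    \<and> n+1 \<in> SS (alg_state_at n q z K k) \<and> SS (alg_state_at n q z K k) \<subseteq> {0..n+1}"
proof (induction k)
  case 0 then show ?case by (simp add: alg_state_at_def alg_init_def)
next
  case (Suc k)
  have pk: "performed n q z K k" using Suc.prems performed_le by force
  note IH = Suc.IH[OF pk]
  have "alg_running n (alg_state_at n q z K k)" using Suc.prems by (simp add: performed_def)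
  then have "istar n (alg_state_at n q z K k) \<in> {1..n} - SS (alg_state_at n q z K k)"
    using IH istar_mem by (simp add: alg_running_def)
  then show ?case using IH SS_Suc[of n q z K k] by auto
qed

lemma istar_perf:
  "performed n q z K k \<Longrightarrow> istar n (alg_state_at n q z K k) \<in> {1..n} - SS (alg_state_at n q z K k)"
  using inv[of n q z K k] istar_mem[of "alg_state_at n q z K k" n]
  by (simp add: performed_def alg_running_def)

lemma upd_intro:
  assumes "performed n q z K k'" "i \<notin> SS (alg_state_at n q z K k')"
    "i < istar n (alg_state_at n q z K k')"
    "\<forall>j. i < j \<and> j < istar n (alg_state_at n q z K k') \<longrightarrow> j \<notin> SS (alg_state_at n q z K k')"
  shows "updates_y n q z K k' i"
proof -
  let ?s = "alg_state_at n q z K k'"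
  let ?I = "istar n ?s"
  let ?B = "{j \<in> SS ?s. j < ?I}"
  have fin: "finite ?B" using inv[OF assms(1)] by simp
  have "0 \<in> ?B" using inv[OF assms(1)] istar_perf[OF assms(1)] by auto
  then have "Max ?B \<in> ?B" using fin by (intro Max_in) auto
  then have "Max ?B < i" using assms(2,4) by (metis (mono_tags, lifting) linorder_neqE_nat mem_Collect_eq)
  then show ?thesis using assms(1,3) by (simp add: updates_y_def iL_def Let_def)
qed

theorem lemma7:
  fixes n :: nat and q z :: "nat \<Rightarrow> real" and K :: real and k :: nat
  assumes "n \<ge> 1"
    and "\<forall>i\<in>{1..n}. 0 < q i"
    and "\<forall>i j. 1 \<le> i \<and> i \<le> j \<and> j \<le> n \<longrightarrow> q i \<le> q j"
    and "\<forall>i\<in>{1..n}. 0 < z i"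
    and "K > 0"
    and "performed n q z K k"
  shows "iR (alg_state_at n q z K k) (istar n (alg_state_at n q z K k))
           = blocker n q z K (istar n (alg_state_at n q z K k))
       \<and> (\<forall>j. istar n (alg_state_at n q z K k) \<le> j
              \<and> j < blocker n q z K (istar n (alg_state_at n q z K k))
              \<longrightarrow> j \<notin> SS (alg_state_at n q z K k))
       \<and> blocker n q z K (istar n (alg_state_at n q z K k)) \<in> SS (alg_state_at n q z K k)"
proof -
  define st where "st = alg_state_at n q z K"
  define i where "i = istar n (st k)"
  define m where "m = blocker n q z K i"
  have perf: "performed n q z K k" by fact
  have imem: "i \<in> {1..n} - SS (st k)" using istar_perf[OF perf] by (simp add: i_def st_def)
  have inotin: "k' \<le> k \<Longrightarrow> i \<notin> SS (st k')" for k'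
    using imem SS_mono[of k' k n q z K] by (auto simp: st_def)
  have U: "updates_y n q z K k' i \<Longrightarrow> k' < k" for k'
  proof (rule ccontr)
    assume u: "updates_y n q z K k' i" and "\<not> k' < k"
    then have kk: "k \<le> k'" by simp
    have pk': "performed n q z K k'" using u by (simp add: updates_y_def)
    let ?s = "st k'"
    let ?I = "istar n ?s"
    have lt: "iL ?s ?I < i" "i < ?I" using u by (simp_all add: updates_y_def Let_def st_def)
    show False
    proof (cases "k' = k")
      case True then show False using lt(2) i_def by simp
    next
      case False
      then have "Suc k \<le> k'" using kk by simp
      then have "i \<in> SS ?s" using SS_mono[of "Suc k" k' n q z K] SS_Suc[of n q z K k]
        by (auto simp: st_def i_def)
      then have "i \<in> {j \<in> SS ?s. j < ?I}" using lt by simp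
      moreover have "finite {j \<in> SS ?s. j < ?I}" using inv[OF pk'] by (simp add: st_def)
      ultimately have "i \<le> iL ?s ?I" unfolding iL_def by (rule Max_ge[rotated])
      then show False using lt by simp
    qed
  qed
  define ex where "ex = (\<exists>k'. updates_y n q z K k' i)"
  define k0 where "k0 = (GREATEST k'. updates_y n q z K k' i)"
  define t where "t = (if ex then Suc k0 else 0)"
  have bnd: "\<forall>y. updates_y n q z K y i \<longrightarrow> y \<le> k" using U less_imp_le by blast
  have mdef: "m = (if ex then istar n (st k0) else n + 1)"
    unfolding m_def blocker_def ex_def k0_def st_def by (rule refl)
  have u0: "updates_y n q z K k0 i" if ex
  proof -
    obtain k1 where "updates_y n q z K k1 i" using \<open>ex\<close> unfolding ex_def by blast
    then show ?thesis using bnd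
      GreatestI_nat[where P="\<lambda>k'. updates_y n q z K k' i" and k=k1 and b=k]
      unfolding k0_def by blast
  qed
  have u0': "iL (st k0) (istar n (st k0)) < i \<and> i < istar n (st k0) \<and> performed n q z K k0" if ex
    using u0[OF that] unfolding updates_y_def Let_def st_def by blast
  have gmax: "k' \<le> k0" if "updates_y n q z K k' i" for k'
    using that bnd
      Greatest_le_nat[where P="\<lambda>k'. updates_y n q z K k' i" and k=k' and b=k]
      unfolding k0_def by blast
  have tk: "t \<le> k"
  proof (cases ex)
    case True
    then have "k0 < k" using U u0 by blast
    then show ?thesis using True unfolding t_def by simp
  qed (simp add: t_def)
  have mi: "i < m"
  proof (cases ex)
    case True
    then show ?thesis using u0' mdef by simp
  next
    case False then show ?thesis using imem mdef by simp
  qed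
  have base: "m \<in> SS (st t) \<and> (\<forall>j. i < j \<and> j < m \<longrightarrow> j \<notin> SS (st t))"
  proof (cases ex)
    case True
    have mk0: "m = istar n (st k0)" using True mdef by simp
    have tt: "t = Suc k0" using True by (simp add: t_def)
    have p0: "performed n q z K k0" using u0' True by blast
    have lt: "iL (st k0) m < i" using u0' True mk0 by simp
    have fin: "finite {j \<in> SS (st k0). j < m}" using inv[OF p0] unfolding st_def by simp
    have "j \<notin> SS (st k0)" if "i < j" "j < m" for j
    proof
      assume "j \<in> SS (st k0)"
      then have "j \<le> iL (st k0) m" unfolding iL_def using fin that by (intro Max_ge) auto
      then show False using lt that by simp
    qed
    moreover have "SS (st t) = insert m (SS (st k0))" using SS_Suc[of n q z K k0] mk0 tt unfolding st_def by simp
    ultimately show ?thesis by auto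
  next
    case False
    have "SS (st t) = {0, n+1}" using False unfolding t_def st_def alg_state_at_def alg_init_def by simp
    then show ?thesis using imem mdef False by auto
  qed
  have P: "t + d \<le> k \<Longrightarrow> m \<in> SS (st (t+d)) \<and> (\<forall>j. i < j \<and> j < m \<longrightarrow> j \<notin> SS (st (t+d)))" for d
  proof (induction d)
    case 0 then show ?case using base by simp
  next
    case (Suc d)
    let ?k' = "t + d"
    have IH: "m \<in> SS (st ?k') \<and> (\<forall>j. i < j \<and> j < m \<longrightarrow> j \<notin> SS (st ?k'))" using Suc by simp
    have pk': "performed n q z K ?k'" using perf Suc.prems performed_le by simp
    let ?I = "istar n (st ?k')"
    have "\<not> (i < ?I \<and> ?I < m)"
    proof
      assume a: "i < ?I \<and> ?I < m"
      have "updates_y n q z K ?k' i"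
        using upd_intro[OF pk', of i] a IH inotin[of ?k'] Suc.prems by (simp add: st_def)
      then show False
      proof (cases "\<exists>k'. updates_y n q z K k' i")
        case True
        then have "ex" unfolding ex_def .
        have "?k' \<le> k0" using gmax \<open>updates_y n q z K ?k' i\<close> by blast
        then show False using \<open>ex\<close> by (simp add: t_def)
      next
        case False
        then show False using \<open>updates_y n q z K ?k' i\<close> by blast
      qed
    qed
    then show ?case using IH SS_Suc[of n q z K ?k'] by (auto simp: st_def)
  qed
  have fin: "m \<in> SS (st k) \<and> (\<forall>j. i < j \<and> j < m \<longrightarrow> j \<notin> SS (st k))"
    using P[of "k - t"] tk by simp
  have finS: "finite (SS (st k))" using inv[OF perf] by (simp add: st_def)
  have A1: "finite {j \<in> SS (st k). i < j}" using finS by simp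
  have A2: "m \<in> {j \<in> SS (st k). i < j}" using fin mi by simp
  have A3: "\<forall>y\<in>{j \<in> SS (st k). i < j}. m \<le> y"
  proof
    fix y assume "y \<in> {j \<in> SS (st k). i < j}"
    then have "y \<in> SS (st k)" "i < y" by auto
    then show "m \<le> y" using fin by (meson not_le)
  qed
  have R: "iR (st k) i = m" unfolding iR_def using A1 A2 A3 by (intro Min_eqI) auto
  have C2: "\<forall>j. i \<le> j \<and> j < m \<longrightarrow> j \<notin> SS (st k)"
  proof (intro allI impI)
    fix j assume "i \<le> j \<and> j < m"
    then have "j = i \<or> (i < j \<and> j < m)" by auto
    then show "j \<notin> SS (st k)" using fin imem by auto
  qed
  have "iR (st k) i = m \<and> (\<forall>j. i \<le> j \<and> j < m \<longrightarrow> j \<notin> SS (st k)) \<and> m \<in> SS (st k)"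
    using R C2 fin by blast
  then show ?thesis unfolding m_def i_def st_def .
qed

end
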